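(* Let $\mathcal{B}(n)$ be the set of pairs $(s,t)\in S_n\times S_n$ whose commutator $[s,t]$ is a $3$-cycle, and $\mathcal{A}(n)\subseteq\mathcal{B}(n)$ the subset of those pairs with $\langle s,t\rangle\in\{A_n,S_n\}$. Then $\#\mathcal{A}(n)/\#\mathcal{B}(n)\to 0$ as $n\to\infty$.
   Context: $[s,t]=sts^{-1}t^{-1}$, with permutations composed as functions. *)

theory Defs
  imports "HOL-Algebra.Sym_Groups" Complex_Main
begin

definition perm_comm :: "(nat \<Rightarrow> nat) \<Rightarrow> (nat \<Rightarrow> nat) \<Rightarrow> (nat \<Rightarrow> nat)" where
  "perm_comm s t = s \<circ> t \<circ> Hilbert_Choice.inv s \<circ> Hilbert_Choice.inv t"

definition B_set :: "nat \<Rightarrow> ((nat \<Rightarrow> nat) \<times> (nat \<Rightarrow> nat)) set" where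
  "B_set n = {(s, t). s \<in> carrier (sym_group n) \<and> t \<in> carrier (sym_group n)
                      \<and> perm_comm s t \<in> three_cycles n}"

definition A_set :: "nat \<Rightarrow> ((nat \<Rightarrow> nat) \<times> (nat \<Rightarrow> nat)) set" where
  "A_set n = {(s, t). (s, t) \<in> B_set n \<and>
       (generate (sym_group n) {s, t} = carrier (alt_group n)
        \<or> generate (sym_group n) {s, t} = carrier (sym_group n))}"

end

theory Submission
  imports Defs "HOL-Real_Asymp.Real_Asymp"
begin

lemma funpow_conj_pt:
  assumes "\<And>x. w (g x) = g (s x)"
  shows "(w ^^ m) (g x) = g ((s ^^ m) x)"
  by (induction m) (simp_all add: assms)

lemma lp_eqI:
  assumes "permutation p" "permutation q" "\<And>m. (p ^^ m) a = a \<longleftrightarrow> (q ^^ m) b = b"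
  shows "least_power p a = least_power q b"
proof -
  have "(p ^^ least_power q b) a = a"
    using assms(3)[of "least_power q b"] least_power_of_permutation(1)[OF assms(2), of b] by simp
  hence "least_power p a dvd least_power q b"
    using least_power_dvd[OF assms(1)] by simp
  moreover have "(q ^^ least_power p a) b = b"
    using assms(3)[of "least_power p a"] least_power_of_permutation(1)[OF assms(1), of a] by simp
  hence "least_power q b dvd least_power p a"
    using least_power_dvd[OF assms(2)] by simp
  ultimately show ?thesis by (simp add: dvd_antisym)
qed

lemma lp_conj:
  assumes "permutation s" "permutation w" "inj g" "\<And>x. w (g x) = g (s x)"
  shows "least_power w (g x) = least_power s x"
proof (rule lp_eqI[OF assms(2,1)])
  fix m
  show "(w ^^ m) (g x) = g x \<longleftrightarrow> (s ^^ m) x = x"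
    using funpow_conj_pt[of w g s, OF assms(4)] assms(3) by (simp add: inj_eq)
qed

lemma lp_step:
  assumes "permutation s" shows "least_power s (s x) = least_power s x"
  by (rule lp_conj[OF assms assms bij_is_inj[OF permutation_bijective[OF assms]]]) simp

lemma lp_pow:
  assumes "permutation s" shows "least_power s ((s ^^ i) x) = least_power s x"
  by (induction i) (simp_all add: lp_step[OF assms])

lemma funpow_mod_lp:
  assumes "permutation p" shows "(p ^^ i) x = (p ^^ (i mod least_power p x)) x"
proof -
  define L where "L = least_power p x"
  have "(p ^^ (i - i mod L)) x = x"
    using least_power_dvd[OF assms] unfolding L_def by (metis dvd_minus_mod)
  have "p ^^ i = p ^^ (i mod L + (i - i mod L))" by simp
  hence "(p ^^ i) x = (p ^^ (i mod L)) ((p ^^ (i - i mod L)) x)"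
    by (simp only: funpow_add o_apply)
  thus ?thesis using \<open>(p ^^ (i - i mod L)) x = x\<close> unfolding L_def by simp
qed

lemma inj_on_orbit:
  assumes "permutation p" shows "inj_on (\<lambda>i. (p ^^ i) x) {0..<least_power p x}"
proof -
  have "distinct (support p x)" using cycle_of_permutation[OF assms] by simp
  thus ?thesis by (simp add: distinct_map)
qed

lemma funpow_eq_iff:
  assumes "permutation p"
  shows "(p ^^ i) x = (p ^^ j) x \<longleftrightarrow> i mod least_power p x = j mod least_power p x"
proof
  assume h: "(p ^^ i) x = (p ^^ j) x"
  have L: "least_power p x > 0" using least_power_of_permutation(2)[OF assms] .
  have "(p ^^ i) x = (p ^^ (i mod least_power p x)) x" "(p ^^ j) x = (p ^^ (j mod least_power p x)) x"
    by (rule funpow_mod_lp[OF assms])+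
  hence "(p ^^ (i mod least_power p x)) x = (p ^^ (j mod least_power p x)) x"
    using h by simp
  moreover have "i mod least_power p x \<in> {0..<least_power p x}" "j mod least_power p x \<in> {0..<least_power p x}"
    using L by auto
  ultimately show "i mod least_power p x = j mod least_power p x"
    by (rule inj_onD[OF inj_on_orbit[OF assms]])
next
  assume "i mod least_power p x = j mod least_power p x"
  thus "(p ^^ i) x = (p ^^ j) x" using funpow_mod_lp[OF assms, of i x] funpow_mod_lp[OF assms, of j x] by simp
qed

lemma orbit_eq:
  assumes "permutation p" shows "range (\<lambda>i. (p ^^ i) x) = (\<lambda>i. (p ^^ i) x) ` {0..<least_power p x}"
  using support_set[OF assms, of x] by simp

lemma card_orbit:
  assumes "permutation p" shows "card (range (\<lambda>i. (p ^^ i) x)) = least_power p x"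
  unfolding orbit_eq[OF assms] using card_image[OF inj_on_orbit[OF assms]] by simp

lemma lp_le_card:
  assumes "p permutes S" "finite S" "x \<in> S"
  shows "least_power p x \<le> card S"
proof -
  have P: "permutation p" using assms permutation_permutes by blast
  have "range (\<lambda>i. (p ^^ i) x) \<subseteq> S"
    using permutes_in_image[OF permutes_funpow[OF assms(1)]] assms(3) by auto
  hence "card (range (\<lambda>i. (p ^^ i) x)) \<le> card S" by (rule card_mono[OF assms(2)])
  thus ?thesis by (simp add: card_orbit[OF P])
qed

definition Cen :: "nat \<Rightarrow> (nat \<Rightarrow> nat) \<Rightarrow> (nat \<Rightarrow> nat) set"
  where "Cen n s = {g. g permutes {1..n} \<and> g \<circ> s = s \<circ> g}"
definition Tt :: "nat \<Rightarrow> (nat \<Rightarrow> nat) \<Rightarrow> (nat \<Rightarrow> nat) set"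
  where "Tt n s = {t. t permutes {1..n} \<and> perm_comm s t \<in> three_cycles n}"
definition ptype :: "nat \<Rightarrow> (nat \<Rightarrow> nat) \<Rightarrow> nat \<Rightarrow> nat"
  where "ptype n s = (\<lambda>l. card {x\<in>{1..n}. least_power s x = l})"

lemma B_eq: "B_set n = Sigma {s. s permutes {1..n}} (Tt n)"
  unfolding B_set_def Tt_def by (auto simp: sym_group_carrier)

lemma perm_comm_apply: "perm_comm s t x = s (t (inv' s (inv' t x)))"
  by (simp add: perm_comm_def)

lemma bij_rinv: "bij s \<Longrightarrow> s (inv' s x) = x"
  by (simp add: bij_is_surj surj_f_inv_f)
lemma bij_linv: "bij s \<Longrightarrow> inv' s (s x) = x"
  by (simp add: bij_is_inj)

lemma commute_inv_pt:
  assumes "bij s" "\<And>x. g (s x) = s (g x)" shows "g (inv' s x) = inv' s (g x)"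
proof -
  have "s (g (inv' s x)) = g x" using assms(2)[of "inv' s x"] bij_rinv[OF assms(1)] by simp
  hence "inv' s (s (g (inv' s x))) = inv' s (g x)" by simp
  thus ?thesis using bij_linv[OF assms(1)] by simp
qed

lemma commute_inv:
  assumes "bij s" "g \<circ> s = s \<circ> g" shows "g \<circ> inv' s = inv' s \<circ> g"
proof (rule ext)
  fix x
  have "\<And>x. g (s x) = s (g x)" using assms(2) by (metis comp_apply)
  thus "(g \<circ> inv' s) x = (inv' s \<circ> g) x" using commute_inv_pt[OF assms(1)] by simp
qed

lemma perm_comm_comp:
  assumes "bij s" "bij t0" "bij g" "g \<circ> s = s \<circ> g"
  shows "perm_comm s (t0 \<circ> g) = perm_comm s t0"
proof (rule ext)
  fix x
  have i: "inv' (t0 \<circ> g) = inv' g \<circ> inv' t0" using o_inv_distrib[OF assms(2,3)] .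
  have c: "g (inv' s y) = inv' s (g y)" for y using commute_inv[OF assms(1,4)] by (metis comp_apply)
  show "perm_comm s (t0 \<circ> g) x = perm_comm s t0 x"
    unfolding perm_comm_apply i using c bij_rinv[OF assms(3)] by simp
qed

lemma fiber_commute:
  assumes "bij s" "bij t" "bij t0" "perm_comm s t = perm_comm s t0"
  shows "(inv' t0 \<circ> t) \<circ> s = s \<circ> (inv' t0 \<circ> t)"
proof -
  have e: "t (inv' s (inv' t x)) = t0 (inv' s (inv' t0 x))" for x
  proof -
    have "s (t (inv' s (inv' t x))) = s (t0 (inv' s (inv' t0 x)))"
      using fun_cong[OF assms(4), of x] by (simp add: perm_comm_apply)
    thus ?thesis using bij_is_inj[OF assms(1)] by (simp add: inj_eq)
  qed
  have u: "inv' t0 (t (inv' s y)) = inv' s (inv' t0 (t y))" for y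
    using e[of "t y"] bij_linv[OF assms(2)] bij_linv[OF assms(3)] by (metis)
  have bi: "bij (inv' s)" using bij_imp_bij_inv[OF assms(1)] .
  have "(inv' t0 \<circ> t) (inv' (inv' s) x) = inv' (inv' s) ((inv' t0 \<circ> t) x)" for x
    by (rule commute_inv_pt[OF bi]) (simp add: u)
  thus ?thesis using inv_inv_eq[OF assms(1)] by (simp add: fun_eq_iff)
qed

lemma three_cycles_sub: "three_cycles n \<subseteq> {p. p permutes {1..n}}"
  using three_cycles_incl[of n] by (auto simp: alt_group_carrier)

lemma finite_three_cycles: "finite (three_cycles n)"
  using finite_subset[OF three_cycles_sub finite_permutations] by simp

lemma finite_Cen: "finite (Cen n s)"
  by (rule finite_subset[OF _ finite_permutations[of "{1..n}"]]) (auto simp: Cen_def)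

lemma finite_Tt: "finite (Tt n s)"
  by (rule finite_subset[OF _ finite_permutations[of "{1..n}"]]) (auto simp: Tt_def)

lemma card_fiber_le:
  assumes "s permutes {1..n}"
  shows "card {t. t permutes {1..n} \<and> perm_comm s t = c} \<le> card (Cen n s)"
proof (cases "{t. t permutes {1..n} \<and> perm_comm s t = c} = {}")
  case True show ?thesis unfolding True by simp
next
  case False
  then obtain t0 where t0: "t0 permutes {1..n}" "perm_comm s t0 = c" by auto
  show ?thesis
  proof (rule card_inj_on_le[OF _ _ finite_Cen])
    show "inj_on (\<lambda>t. inv' t0 \<circ> t) {t. t permutes {1..n} \<and> perm_comm s t = c}"
    proof (rule inj_onI)
      fix x y assume "inv' t0 \<circ> x = inv' t0 \<circ> y"
      hence "t0 \<circ> (inv' t0 \<circ> x) = t0 \<circ> (inv' t0 \<circ> y)" by simp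
      thus "x = y" using permutes_inv_o(1)[OF t0(1)] by (simp add: o_assoc)
    qed
    show "(\<lambda>t. inv' t0 \<circ> t) ` {t. t permutes {1..n} \<and> perm_comm s t = c} \<subseteq> Cen n s"
    proof
      fix u assume "u \<in> (\<lambda>t. inv' t0 \<circ> t) ` {t. t permutes {1..n} \<and> perm_comm s t = c}"
      then obtain t where t: "t permutes {1..n}" "perm_comm s t = c" "u = inv' t0 \<circ> t" by auto
      have "u permutes {1..n}" using t(1,3) permutes_compose permutes_inv[OF t0(1)] by simp
      moreover have "u \<circ> s = s \<circ> u"
        using fiber_commute[OF permutes_bij[OF assms] permutes_bij[OF t(1)] permutes_bij[OF t0(1)]]
          t(2,3) t0(2) by simp
      ultimately show "u \<in> Cen n s" by (simp add: Cen_def)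
    qed
  qed
qed

lemma card_Tt_le:
  assumes "s permutes {1..n}"
  shows "card (Tt n s) \<le> card (three_cycles n) * card (Cen n s)"
proof -
  have "Tt n s = (\<Union>c\<in>three_cycles n. {t. t permutes {1..n} \<and> perm_comm s t = c})"
    by (auto simp: Tt_def)
  hence "card (Tt n s) \<le> (\<Sum>c\<in>three_cycles n. card {t. t permutes {1..n} \<and> perm_comm s t = c})"
    using card_UN_le[OF finite_three_cycles] by simp
  also have "\<dots> \<le> (\<Sum>c\<in>three_cycles n. card (Cen n s))"
    by (rule sum_mono) (rule card_fiber_le[OF assms])
  finally show ?thesis by simp
qed

lemma card_Cen_le_Tt:
  assumes "s permutes {1..n}" "t0 \<in> Tt n s"
  shows "card (Cen n s) \<le> card (Tt n s)"
proof (rule card_inj_on_le[OF _ _ finite_Tt])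
  have t0: "t0 permutes {1..n}" "perm_comm s t0 \<in> three_cycles n" using assms(2) by (auto simp: Tt_def)
  show "inj_on (\<lambda>g. t0 \<circ> g) (Cen n s)"
  proof (rule inj_onI)
    fix x y assume "t0 \<circ> x = t0 \<circ> y"
    hence "inv' t0 \<circ> (t0 \<circ> x) = inv' t0 \<circ> (t0 \<circ> y)" by simp
    thus "x = y" using permutes_inv_o(2)[OF t0(1)] by (simp add: o_assoc)
  qed
  show "(\<lambda>g. t0 \<circ> g) ` Cen n s \<subseteq> Tt n s"
  proof
    fix u assume "u \<in> (\<lambda>g. t0 \<circ> g) ` Cen n s"
    then obtain g where g: "g permutes {1..n}" "g \<circ> s = s \<circ> g" "u = t0 \<circ> g" by (auto simp: Cen_def)
    have "perm_comm s u = perm_comm s t0"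
      using perm_comm_comp[OF permutes_bij[OF assms(1)] permutes_bij[OF t0(1)] permutes_bij[OF g(1)] g(2)] g(3)
      by simp
    thus "u \<in> Tt n s" using t0 g(1,3) permutes_compose by (simp add: Tt_def)
  qed
qed

lemma card_three_cycles: "card (three_cycles n) \<le> n ^ 3"
proof -
  define f where "f = (\<lambda>(a,b,c). cycle_of_list [a,b,c::nat])"
  define P where "P = {1..n} \<times> {1..n} \<times> ({1..n}::nat set)"
  have sub: "three_cycles n \<subseteq> f ` P"
  proof
    fix p assume "p \<in> three_cycles n"
    then obtain cs where cs: "p = cycle_of_list cs" "length cs = 3" "set cs \<subseteq> {1..n}" by auto
    obtain a b c where abc: "cs = [a,b,c]" using stupid_lemma[OF cs(2)] by blast
    have m: "(a,b,c) \<in> P" using cs(3) abc by (auto simp: P_def)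
    have "p = f (a,b,c)" using cs(1) abc by (simp add: f_def)
    thus "p \<in> f ` P" using m by blast
  qed
  have fP: "finite P" by (simp add: P_def)
  have "card (three_cycles n) \<le> card (f ` P)"
    by (rule card_mono[OF finite_imageI[OF fP] sub])
  also have "\<dots> \<le> card P" by (rule card_image_le[OF fP])
  also have "\<dots> = n ^ 3" by (simp add: P_def card_cartesian_product power3_eq_cube)
  finally show ?thesis .
qed

lemma orbit_stable:
  assumes "p permutes S" "finite S"
  shows "p ` range (\<lambda>i. (p ^^ i) x) = range (\<lambda>i. (p ^^ i) x)"
    and "\<And>u. u \<notin> range (\<lambda>i. (p ^^ i) x) \<Longrightarrow> p u \<notin> range (\<lambda>i. (p ^^ i) x)"
proof -
  define Ob where "Ob = range (\<lambda>i. (p ^^ i) x)"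
  have P: "permutation p" using permutes_imp_permutation[OF assms(2,1)] .
  have fO: "finite Ob" unfolding Ob_def orbit_eq[OF P] by simp
  have sub: "p ` Ob \<subseteq> Ob" unfolding Ob_def
  proof
    fix z assume "z \<in> p ` range (\<lambda>i. (p ^^ i) x)"
    then obtain i where "z = p ((p ^^ i) x)" by auto
    hence "z = (p ^^ Suc i) x" by simp
    thus "z \<in> range (\<lambda>i. (p ^^ i) x)" by blast
  qed
  have pO: "p ` Ob = Ob"
    by (rule endo_inj_surj[OF fO sub]) (use permutes_inj[OF assms(1)] inj_on_subset in blast)
  thus "p ` range (\<lambda>i. (p ^^ i) x) = range (\<lambda>i. (p ^^ i) x)" unfolding Ob_def .
  fix u assume u: "u \<notin> range (\<lambda>i. (p ^^ i) x)"
  show "p u \<notin> range (\<lambda>i. (p ^^ i) x)"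
  proof
    assume "p u \<in> range (\<lambda>i. (p ^^ i) x)"
    then obtain v where "v \<in> Ob" "p u = p v" using pO unfolding Ob_def by (metis imageE)
    hence "u = v" using permutes_inj[OF assms(1)] by (simp add: inj_eq)
    thus False using u \<open>v \<in> Ob\<close> unfolding Ob_def by simp
  qed
qed

lemma conj_gen:
  fixes p q :: "nat \<Rightarrow> nat"
  assumes "finite S" "finite S'" "p permutes S" "q permutes S'"
    "\<And>l. card {x\<in>S. least_power p x = l} = card {x\<in>S'. least_power q x = l}"
  shows "\<exists>h. bij_betw h S S' \<and> (\<forall>x\<in>S. h (p x) = q (h x))"
  using assms
proof (induction "card S" arbitrary: S S' p q rule: less_induct)
  case less
  note fS = less.prems(1) and fS' = less.prems(2) and pp = less.prems(3) and qp = less.prems(4)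
    and cnt = less.prems(5)
  have P: "permutation p" using permutes_imp_permutation[OF fS pp] .
  have Q: "permutation q" using permutes_imp_permutation[OF fS' qp] .
  show ?case
  proof (cases "S = {}")
    case True
    have "S' = {}"
    proof (rule ccontr)
      assume "S' \<noteq> {}"
      then obtain y where y: "y \<in> S'" by auto
      have "card {x\<in>S'. least_power q x = least_power q y} > 0"
        using y fS' by (subst card_gt_0_iff) auto
      thus False using cnt[of "least_power q y"] True by simp
    qed
    thus ?thesis using True by (simp add: bij_betw_def)
  next
    case False
    then obtain x where x: "x \<in> S" by auto
    define lL where "lL = least_power p x"
    have "card {z\<in>S. least_power p z = lL} > 0"
      using x fS by (subst card_gt_0_iff) (auto simp: lL_def)
    hence "card {z\<in>S'. least_power q z = lL} > 0" using cnt by simp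
    hence "{z\<in>S'. least_power q z = lL} \<noteq> {}"
      by (intro notI) (simp only: card.empty less_irrefl)
    then obtain y where y: "y \<in> S'" "least_power q y = lL" by blast
    define Ob where "Ob = range (\<lambda>i. (p ^^ i) x)"
    define Ob' where "Ob' = range (\<lambda>i. (q ^^ i) y)"
    have OS: "Ob \<subseteq> S" unfolding Ob_def using permutes_in_image[OF permutes_funpow[OF pp]] x by auto
    have OS': "Ob' \<subseteq> S'" unfolding Ob'_def using permutes_in_image[OF permutes_funpow[OF qp]] y by auto
    have cO: "card Ob = lL" unfolding Ob_def lL_def by (rule card_orbit[OF P])
    have cO': "card Ob' = lL" unfolding Ob'_def using card_orbit[OF Q] y(2) by simp
    have lpO: "least_power p z = lL" if "z \<in> Ob" for z
      using that lp_pow[OF P] unfolding Ob_def lL_def by auto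
    have lpO': "least_power q z = lL" if "z \<in> Ob'" for z
      using that lp_pow[OF Q] y(2) unfolding Ob'_def by auto
    note stO = orbit_stable[OF pp fS, where x=x, folded Ob_def]
    note stO' = orbit_stable[OF qp fS', where x=y, folded Ob'_def]
    define p' where "p' = (\<lambda>z. if z \<in> Ob then z else p z)"
    define q' where "q' = (\<lambda>z. if z \<in> Ob' then z else q z)"
    have restr: "\<And>(f::nat\<Rightarrow>nat) (T::nat set) (U::nat set). f permutes T \<Longrightarrow> finite T \<Longrightarrow> (\<And>u. u \<notin> U \<Longrightarrow> f u \<notin> U) \<Longrightarrow>
        (\<lambda>z. if z \<in> U then z else f z) permutes (T - U)
        \<and> (\<forall>z. z \<notin> U \<longrightarrow> (\<forall>m. ((\<lambda>z. if z \<in> U then z else f z) ^^ m) z = (f ^^ m) z))"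
    proof -
      fix f :: "nat \<Rightarrow> nat" and T U
      assume fT: "f permutes T" "finite T" "\<And>u. u \<notin> U \<Longrightarrow> f u \<notin> U"
      define f' where "f' = (\<lambda>z. if z \<in> U then z else f z)"
      have f'o: "f' z = f z" if "z \<notin> U" for z using that by (simp add: f'_def)
      have it: "(f' ^^ m) z = (f ^^ m) z \<and> (f ^^ m) z \<notin> U" if "z \<notin> U" for z m
      proof (induction m)
        case 0 thus ?case using that by simp
      next
        case (Suc m)
        have "(f' ^^ Suc m) z = f' ((f ^^ m) z)" using Suc by simp
        also have "\<dots> = f ((f ^^ m) z)" using Suc f'o by blast
        finally show ?case using fT(3) Suc by simp
      qed
      have inj: "inj_on f' (T - U)"
      proof (rule inj_onI)
        fix a b assume "a \<in> T - U" "b \<in> T - U" "f' a = f' b"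
        hence "f a = f b" using f'o by simp
        thus "a = b" using permutes_inj[OF fT(1)] by (simp add: inj_eq)
      qed
      have sub: "f' ` (T - U) \<subseteq> T - U"
      proof
        fix w assume "w \<in> f' ` (T - U)"
        then obtain z where z: "z \<in> T" "z \<notin> U" "w = f' z" by blast
        have "w = f z" using z f'o by simp
        thus "w \<in> T - U" using permutes_in_image[OF fT(1)] z fT(3) by simp
      qed
      have fTU: "finite (T - U)" using fT(2) by simp
      have "f' ` (T - U) = T - U" by (rule endo_inj_surj[OF fTU sub inj])
      hence "bij_betw f' (T - U) (T - U)" using inj by (simp add: bij_betw_def)
      moreover have "f' z = z" if "z \<notin> T - U" for z
      proof (cases "z \<in> U")
        case True thus ?thesis by (simp add: f'_def)
      next
        case False
        hence "z \<notin> T" using that by simp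
        thus ?thesis using permutes_not_in[OF fT(1)] False by (simp add: f'_def)
      qed
      ultimately have fp: "f' permutes (T - U)" by (rule bij_imp_permutes)
      have "\<forall>z. z \<notin> U \<longrightarrow> (\<forall>m. (f' ^^ m) z = (f ^^ m) z)" using it by blast
      with fp show "(\<lambda>z. if z \<in> U then z else f z) permutes (T - U)
        \<and> (\<forall>z. z \<notin> U \<longrightarrow> (\<forall>m. ((\<lambda>z. if z \<in> U then z else f z) ^^ m) z = (f ^^ m) z))"
        unfolding f'_def by (intro conjI)
    qed
    have p'p: "p' permutes (S - Ob)" and p'it: "\<And>z m. z \<notin> Ob \<Longrightarrow> (p' ^^ m) z = (p ^^ m) z"
      using restr[of p S Ob, OF pp fS stO(2)] unfolding p'_def by blast+
    have q'p: "q' permutes (S' - Ob')" and q'it: "\<And>z m. z \<notin> Ob' \<Longrightarrow> (q' ^^ m) z = (q ^^ m) z"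
      using restr[of q S' Ob', OF qp fS' stO'(2)] unfolding q'_def by blast+
    have lp': "least_power p' z = least_power p z" if "z \<notin> Ob" for z
      unfolding least_power_def using p'it[OF that] by simp
    have lq': "least_power q' z = least_power q z" if "z \<notin> Ob'" for z
      unfolding least_power_def using q'it[OF that] by simp
    have cnt': "card {z\<in>S - Ob. least_power p' z = l} = card {z\<in>S' - Ob'. least_power q' z = l}" for l
    proof -
      have e1: "{z\<in>S - Ob. least_power p' z = l} = {z\<in>S. least_power p z = l} - Ob" using lp' by auto
      have e2: "{z\<in>S' - Ob'. least_power q' z = l} = {z\<in>S'. least_power q z = l} - Ob'" using lq' by auto
      have c1: "card ({z\<in>S. least_power p z = l} - Ob) = card {z\<in>S. least_power p z = l} - (if l = lL then lL else 0)"
      proof (cases "l = lL")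
        case True
        have "Ob \<subseteq> {z\<in>S. least_power p z = l}" using OS lpO True by auto
        thus ?thesis using True cO card_Diff_subset[of Ob] finite_subset[OF OS fS] by simp
      next
        case False
        have "{z\<in>S. least_power p z = l} - Ob = {z\<in>S. least_power p z = l}" using lpO False by auto
        thus ?thesis using False by simp
      qed
      have c2: "card ({z\<in>S'. least_power q z = l} - Ob') = card {z\<in>S'. least_power q z = l} - (if l = lL then lL else 0)"
      proof (cases "l = lL")
        case True
        have "Ob' \<subseteq> {z\<in>S'. least_power q z = l}" using OS' lpO' True by auto
        thus ?thesis using True cO' card_Diff_subset[of Ob'] finite_subset[OF OS' fS'] by simp
      next
        case False
        have "{z\<in>S'. least_power q z = l} - Ob' = {z\<in>S'. least_power q z = l}" using lpO' False by auto
        thus ?thesis using False by simp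
      qed
      show ?thesis using e1 e2 c1 c2 cnt[of l] by simp
    qed
    have lt: "card (S - Ob) < card S"
    proof -
      have "x \<in> Ob" unfolding Ob_def by (rule range_eqI[of _ _ 0]) simp
      hence "S - Ob \<subset> S" using x by blast
      thus ?thesis by (rule psubset_card_mono[OF fS])
    qed
    obtain h' where h': "bij_betw h' (S - Ob) (S' - Ob')" "\<forall>z\<in>S - Ob. h' (p' z) = q' (h' z)"
      using less.hyps[OF lt finite_Diff[OF fS] finite_Diff[OF fS'] p'p q'p cnt'] by blast
    define j where "j = (\<lambda>z. SOME i. (p ^^ i) x = z)"
    define h where "h = (\<lambda>z. if z \<in> Ob then (q ^^ j z) y else h' z)"
    have hO: "h ((p ^^ i) x) = (q ^^ i) y" for i
    proof -
      have "(p ^^ j ((p ^^ i) x)) x = (p ^^ i) x" unfolding j_def by (rule someI[of _ i]) simp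
      hence "j ((p ^^ i) x) mod lL = i mod lL" using funpow_eq_iff[OF P] lL_def by simp
      hence "(q ^^ j ((p ^^ i) x)) y = (q ^^ i) y" using funpow_eq_iff[OF Q] y(2) by simp
      moreover have "(p ^^ i) x \<in> Ob" unfolding Ob_def by blast
      ultimately show ?thesis by (simp add: h_def)
    qed
    have b1: "bij_betw h Ob Ob'"
    proof (rule bij_betw_imageI)
      show "inj_on h Ob"
      proof (rule inj_onI)
        fix a b assume "a \<in> Ob" "b \<in> Ob" "h a = h b"
        then obtain i k where ik: "a = (p ^^ i) x" "b = (p ^^ k) x" "(q ^^ i) y = (q ^^ k) y"
          unfolding Ob_def using hO by auto
        hence "i mod lL = k mod lL" using funpow_eq_iff[OF Q] y(2) by simp
        thus "a = b" using ik funpow_eq_iff[OF P] lL_def by simp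
      qed
      show "h ` Ob = Ob'" unfolding Ob_def Ob'_def image_image hO by (rule refl)
    qed
    have b2: "bij_betw h (S - Ob) (S' - Ob')"
      using h'(1) by (rule bij_betw_cong[THEN iffD1, rotated]) (simp add: h_def)
    have "bij_betw h (Ob \<union> (S - Ob)) (Ob' \<union> (S' - Ob'))"
      by (rule bij_betw_combine[OF b1 b2]) blast
    moreover have "Ob \<union> (S - Ob) = S" "Ob' \<union> (S' - Ob') = S'" using OS OS' by auto
    ultimately have bh: "bij_betw h S S'" by simp
    have com: "h (p z) = q (h z)" if "z \<in> S" for z
    proof (cases "z \<in> Ob")
      case True
      then obtain i where i: "z = (p ^^ i) x" unfolding Ob_def by auto
      have "h (p z) = h ((p ^^ Suc i) x)" using i by simp
      also have "\<dots> = (q ^^ Suc i) y" by (rule hO)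
      also have "\<dots> = q (h z)" using hO i by simp
      finally show ?thesis .
    next
      case False
      have pz: "p z \<notin> Ob" using stO(2)[OF False] .
      have "p z = p' z" using False by (simp add: p'_def)
      hence "h (p z) = h' (p' z)" using pz by (simp add: h_def)
      also have "\<dots> = q' (h' z)" using h'(2) that False by blast
      also have "h' z \<in> S' - Ob'" using bij_betwE[OF h'(1)] that False by blast
      hence "q' (h' z) = q (h' z)" by (simp add: q'_def)
      finally show ?thesis using False by (simp add: h_def)
    qed
    show ?thesis using bh com by blast
  qed
qed

lemma conj_exists:
  assumes "s0 permutes {1..n}" "s permutes {1..n}" "ptype n s = ptype n s0"
  shows "\<exists>h. h permutes {1..n} \<and> h \<circ> s0 = s \<circ> h"
proof -
  have c: "card {x\<in>{1..n}. least_power s0 x = l} = card {x\<in>{1..n}. least_power s x = l}" for l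
    using fun_cong[OF assms(3), of l] by (simp add: ptype_def)
  obtain h where h: "bij_betw h {1..n} {1..n}" "\<forall>x\<in>{1..n}. h (s0 x) = s (h x)"
    using conj_gen[OF _ _ assms(1,2) c] by blast
  define h2 where "h2 = (\<lambda>z. if z \<in> {1..n} then h z else z)"
  have "bij_betw h2 {1..n} {1..n}" using h(1) by (rule bij_betw_cong[THEN iffD1, rotated]) (simp add: h2_def)
  hence hp: "h2 permutes {1..n}" by (rule bij_imp_permutes) (auto simp: h2_def)
  have "h2 \<circ> s0 = s \<circ> h2"
  proof (rule ext)
    fix z show "(h2 \<circ> s0) z = (s \<circ> h2) z"
    proof (cases "z \<in> {1..n}")
      case True
      have "s0 z \<in> {1..n}" using permutes_in_image[OF assms(1)] True by simp
      thus ?thesis using True h(2) by (simp add: h2_def)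
    next
      case False
      have a: "s0 z = z" "s z = z" using permutes_not_in[OF assms(1) False] permutes_not_in[OF assms(2) False] by auto
      have "h2 z = z" unfolding h2_def by (simp only: False if_False)
      thus ?thesis using a by simp
    qed
  qed
  thus ?thesis using hp by blast
qed

lemma perm_of: assumes "p permutes {1..n::nat}" shows "permutation p"
  using permutes_imp_permutation[OF _ assms] by simp

lemma lp_conj_perm:
  assumes "g permutes {1..n::nat}" "s permutes {1..n}" "w permutes {1..n}" "w \<circ> g = g \<circ> s"
  shows "least_power w (g x) = least_power s x"
  by (rule lp_conj[OF perm_of[OF assms(2)] perm_of[OF assms(3)] permutes_inj[OF assms(1)]])
     (metis assms(4) comp_apply)

lemma ptype_conj:
  assumes "g permutes {1..n}" "s permutes {1..n}" "w permutes {1..n}" "w \<circ> g = g \<circ> s"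
  shows "ptype n w = ptype n s"
proof (rule ext)
  fix l
  have "{y\<in>{1..n}. least_power w y = l} = g ` {x\<in>{1..n}. least_power s x = l}"
  proof
    show "g ` {x\<in>{1..n}. least_power s x = l} \<subseteq> {y\<in>{1..n}. least_power w y = l}"
      using lp_conj_perm[OF assms] permutes_in_image[OF assms(1)] by auto
    show "{y\<in>{1..n}. least_power w y = l} \<subseteq> g ` {x\<in>{1..n}. least_power s x = l}"
    proof
      fix y assume y: "y \<in> {y\<in>{1..n}. least_power w y = l}"
      have "y = g (inv' g y)" using permutes_inverses(1)[OF assms(1)] by simp
      moreover have "inv' g y \<in> {1..n}" using y permutes_in_image[OF permutes_inv[OF assms(1)]] by auto
      moreover have "least_power s (inv' g y) = l"
        using y lp_conj_perm[OF assms, of "inv' g y"] permutes_inverses(1)[OF assms(1)] by simp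
      ultimately show "y \<in> g ` {x\<in>{1..n}. least_power s x = l}" by blast
    qed
  qed
  thus "ptype n w l = ptype n s l"
    unfolding ptype_def using card_image[OF inj_on_subset[OF permutes_inj[OF assms(1)]]] by simp
qed

lemma conj_comp: "g permutes S \<Longrightarrow> (g \<circ> s \<circ> inv' g) \<circ> g = g \<circ> s"
  by (simp add: fun_eq_iff permutes_inverses)

lemma conj_permutes: "g permutes S \<Longrightarrow> s permutes S \<Longrightarrow> (g \<circ> s \<circ> inv' g) permutes S"
  by (simp add: permutes_compose permutes_inv)

lemma three_cycles_conj:
  assumes "g permutes {1..n}" "c \<in> three_cycles n"
  shows "g \<circ> c \<circ> inv' g \<in> three_cycles n"
proof -
  obtain cs where cs: "c = cycle_of_list cs" "cycle cs" "length cs = 3" "set cs \<subseteq> {1..n}" using assms(2) by auto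
  have "g \<circ> c \<circ> inv' g = cycle_of_list (map g cs)"
    using conjugation_of_cycle[OF cs(2) permutes_bij[OF assms(1)]] cs(1) by simp
  moreover have "cycle (map g cs)" using cs(2) distinct_map permutes_inj[OF assms(1)] inj_on_subset by fastforce
  moreover have "length (map g cs) = 3" using cs(3) by simp
  moreover have "set (map g cs) \<subseteq> {1..n}" using cs(4) permutes_in_image[OF assms(1)] by auto
  ultimately show ?thesis by blast
qed

lemma perm_comm_conj:
  assumes "g permutes S" "s permutes S" "t permutes S"
  shows "perm_comm (g \<circ> s \<circ> inv' g) (g \<circ> t \<circ> inv' g) = g \<circ> perm_comm s t \<circ> inv' g"
proof -
  have bg: "bij g" "bij (inv' g)" using permutes_bij[OF assms(1)] bij_imp_bij_inv by auto
  have iv: "inv' (g \<circ> s \<circ> inv' g) = g \<circ> inv' s \<circ> inv' g" if "s permutes S" for s :: "nat \<Rightarrow> nat"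
    using o_inv_distrib[OF bij_comp[OF permutes_bij[OF that] bg(1)] bg(2)]
      o_inv_distrib[OF bg(1) permutes_bij[OF that]] inv_inv_eq[OF bg(1)] by (simp add: comp_assoc)
  show ?thesis
    by (simp add: fun_eq_iff perm_comm_apply iv[OF assms(2)] iv[OF assms(3)] permutes_inverses[OF assms(1)])
qed

lemma Tt_conj:
  assumes "g permutes {1..n}" "s permutes {1..n}" "t \<in> Tt n s"
  shows "g \<circ> t \<circ> inv' g \<in> Tt n (g \<circ> s \<circ> inv' g)"
proof -
  have t: "t permutes {1..n}" "perm_comm s t \<in> three_cycles n" using assms(3) by (auto simp: Tt_def)
  show ?thesis
    unfolding Tt_def using perm_comm_conj[OF assms(1,2) t(1)] three_cycles_conj[OF assms(1) t(2)]
      conj_permutes[OF assms(1) t(1)] by simp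
qed

lemma card_G: "card {p. p permutes {1..n::nat}} = fact n"
  by (rule card_permutations) simp_all

lemma sum_Cen_lower:
  assumes X: "X \<subseteq> {s. s permutes {1..n}}"
    and cl: "\<And>s g. s \<in> X \<Longrightarrow> g permutes {1..n} \<Longrightarrow> g \<circ> s \<circ> inv' g \<in> X"
    and s0: "s0 \<in> X"
  shows "fact n \<le> (\<Sum>s\<in>{s\<in>X. ptype n s = ptype n s0}. card (Cen n s))"
proof -
  define F where "F = {s\<in>X. ptype n s = ptype n s0}"
  define H where "H = (\<lambda>s. SOME h. h permutes {1..n} \<and> h \<circ> s0 = s \<circ> h)"
  have s0p: "s0 permutes {1..n}" using X s0 by auto
  have fF: "finite F"
    by (rule finite_subset[OF _ finite_permutations[of "{1..n}"]]) (use X in \<open>auto simp: F_def\<close>)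
  have Hs: "H (g \<circ> s0 \<circ> inv' g) permutes {1..n} \<and> H (g \<circ> s0 \<circ> inv' g) \<circ> s0 = (g \<circ> s0 \<circ> inv' g) \<circ> H (g \<circ> s0 \<circ> inv' g)"
    if "g permutes {1..n}" for g
    unfolding H_def by (rule someI[of _ g], intro conjI that conj_comp[OF that, symmetric])
  define \<phi> where "\<phi> = (\<lambda>g. (g \<circ> s0 \<circ> inv' g, g \<circ> inv' (H (g \<circ> s0 \<circ> inv' g))))"
  have "card {p. p permutes {1..n}} \<le> card (Sigma F (Cen n))"
  proof (rule card_inj_on_le)
    show "finite (Sigma F (Cen n))" using fF finite_Cen by auto
    show "inj_on \<phi> {p. p permutes {1..n}}"
    proof (rule inj_onI)
      fix g1 g2 assume g1: "g1 \<in> {p. p permutes {1..n}}" and g2: "g2 \<in> {p. p permutes {1..n}}"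
        and e: "\<phi> g1 = \<phi> g2"
      define h where "h = H (g1 \<circ> s0 \<circ> inv' g1)"
      have hp: "h permutes {1..n}" using Hs g1 h_def by auto
      have "g1 \<circ> inv' h = g2 \<circ> inv' h" using e unfolding \<phi>_def h_def by auto
      hence "g1 \<circ> inv' h \<circ> h = g2 \<circ> inv' h \<circ> h" by simp
      thus "g1 = g2" using permutes_inv_o(2)[OF hp] by (simp add: comp_assoc)
    qed
    show "\<phi> ` {p. p permutes {1..n}} \<subseteq> Sigma F (Cen n)"
    proof
      fix z assume "z \<in> \<phi> ` {p. p permutes {1..n}}"
      then obtain g where g: "g permutes {1..n}" "z = \<phi> g" by auto
      define s where "s = g \<circ> s0 \<circ> inv' g"
      define h where "h = H s"
      have hp: "h permutes {1..n}" "h \<circ> s0 = s \<circ> h" using Hs[OF g(1)] unfolding h_def s_def by auto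
      have sp: "s permutes {1..n}" using conj_permutes[OF g(1) s0p] s_def by simp
      have sF: "s \<in> F"
        unfolding F_def using cl[OF s0 g(1)] ptype_conj[OF g(1) s0p sp] conj_comp[OF g(1), of s0] s_def by simp
      have w1: "inv' h (s y) = s0 (inv' h y)" for y
      proof -
        have "h (s0 (inv' h y)) = s (h (inv' h y))" using fun_cong[OF hp(2), of "inv' h y"] by simp
        hence "h (s0 (inv' h y)) = s y" using permutes_inverses(1)[OF hp(1)] by simp
        thus ?thesis using permutes_inverses(2)[OF hp(1)] by metis
      qed
      have w2: "g (s0 y) = s (g y)" for y using fun_cong[OF conj_comp[OF g(1), of s0], of y] s_def by simp
      have "(g \<circ> inv' h) \<circ> s = s \<circ> (g \<circ> inv' h)" by (simp add: fun_eq_iff w1 w2)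
      moreover have "(g \<circ> inv' h) permutes {1..n}" using permutes_compose[OF permutes_inv[OF hp(1)] g(1)] .
      ultimately have "g \<circ> inv' h \<in> Cen n s" by (simp add: Cen_def)
      thus "z \<in> Sigma F (Cen n)" using sF g(2) unfolding \<phi>_def s_def h_def by simp
    qed
  qed
  also have "\<dots> = (\<Sum>s\<in>F. card (Cen n s))" using card_SigmaI[OF fF, of "Cen n"] finite_Cen by simp
  finally show ?thesis using card_G F_def by simp
qed

lemma sum_Cen_upper:
  assumes F: "F \<subseteq> {s. s permutes {1..n} \<and> ptype n s = \<tau>}"
  shows "(\<Sum>s\<in>F. card (Cen n s)) \<le> fact n"
proof (cases "F = {}")
  case True thus ?thesis by simp
next
  case False
  then obtain s0 where s0: "s0 \<in> F" by auto
  have s0p: "s0 permutes {1..n}" using F s0 by auto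
  have fF: "finite F"
    by (rule finite_subset[OF _ finite_permutations[of "{1..n}"]]) (use F in auto)
  define H where "H = (\<lambda>s. SOME h. h permutes {1..n} \<and> h \<circ> s0 = s \<circ> h)"
  have Hs: "H s permutes {1..n} \<and> H s \<circ> s0 = s \<circ> H s" if "s \<in> F" for s
  proof -
    have "ptype n s = ptype n s0" using F that s0 by auto
    hence "\<exists>h. h permutes {1..n} \<and> h \<circ> s0 = s \<circ> h" using conj_exists[OF s0p] F that by auto
    thus ?thesis unfolding H_def by (rule someI_ex)
  qed
  define \<psi> where "\<psi> = (\<lambda>(s::nat\<Rightarrow>nat, g::nat\<Rightarrow>nat). g \<circ> H s)"
  have "(\<Sum>s\<in>F. card (Cen n s)) = card (Sigma F (Cen n))" using card_SigmaI[OF fF, of "Cen n"] finite_Cen by simp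
  also have "\<dots> \<le> card {p. p permutes {1..n}}"
  proof (rule card_inj_on_le)
    show "finite {p. p permutes {1..n::nat}}" by (simp add: finite_permutations)
    have key: "(g \<circ> H s) \<circ> s0 = s \<circ> (g \<circ> H s)" if "s \<in> F" "g \<in> Cen n s" for s g
    proof -
      have "(g \<circ> H s) \<circ> s0 = g \<circ> (s \<circ> H s)" using Hs[OF that(1)] by (simp add: comp_assoc)
      also have "\<dots> = s \<circ> (g \<circ> H s)" using that(2) by (simp add: Cen_def o_assoc)
      finally show ?thesis .
    qed
    show "inj_on \<psi> (Sigma F (Cen n))"
    proof (rule inj_onI)
      fix a b assume a: "a \<in> Sigma F (Cen n)" and b: "b \<in> Sigma F (Cen n)" and e: "\<psi> a = \<psi> b"
      obtain s g where sg: "a = (s,g)" "s \<in> F" "g \<in> Cen n s" using a by auto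
      obtain s' g' where sg': "b = (s',g')" "s' \<in> F" "g' \<in> Cen n s'" using b by auto
      define w where "w = g \<circ> H s"
      have wp: "w permutes {1..n}" using Hs[OF sg(2)] sg(3) permutes_compose by (auto simp: w_def Cen_def)
      have ww: "w = g' \<circ> H s'" using e sg sg' by (simp add: \<psi>_def w_def)
      have "s \<circ> w = s' \<circ> w" using key[OF sg(2,3)] key[OF sg'(2,3)] ww w_def by simp
      hence "s \<circ> w \<circ> inv' w = s' \<circ> w \<circ> inv' w" by simp
      hence ss: "s = s'" using permutes_inv_o(1)[OF wp] by (simp add: comp_assoc)
      have hp: "H s permutes {1..n}" using Hs[OF sg(2)] by simp
      have "g \<circ> H s = g' \<circ> H s" using ww ss w_def by simp
      hence "g \<circ> H s \<circ> inv' (H s) = g' \<circ> H s \<circ> inv' (H s)" by simp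
      hence "g = g'" using permutes_inv_o(1)[OF hp] by (simp add: comp_assoc)
      thus "a = b" using sg sg' ss by simp
    qed
    show "\<psi> ` Sigma F (Cen n) \<subseteq> {p. p permutes {1..n}}"
    proof
      fix z assume "z \<in> \<psi> ` Sigma F (Cen n)"
      then obtain s g where "s \<in> F" "g \<in> Cen n s" "z = g \<circ> H s" by (auto simp: \<psi>_def)
      thus "z \<in> {p. p permutes {1..n}}"
        using Hs[of s] permutes_compose[of "H s" "{1..n}" g] by (auto simp: Cen_def)
    qed
  qed
  also have "\<dots> = fact n" by (rule card_G)
  finally show ?thesis .
qed

lemma sum_types_lower:
  assumes X: "X \<subseteq> {s. s permutes {1..n}}"
    and cl: "\<And>s g. s \<in> X \<Longrightarrow> g permutes {1..n} \<Longrightarrow> g \<circ> s \<circ> inv' g \<in> X"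
  shows "fact n * card (ptype n ` X) \<le> (\<Sum>s\<in>X. card (Cen n s))"
proof -
  have fX: "finite X" by (rule finite_subset[OF X finite_permutations]) simp
  have "(\<Sum>s\<in>X. card (Cen n s)) = (\<Sum>y\<in>ptype n ` X. \<Sum>s\<in>{x\<in>X. ptype n x = y}. card (Cen n s))"
    by (rule sum.image_gen[OF fX])
  also have "\<dots> \<ge> (\<Sum>y\<in>ptype n ` X. fact n)"
  proof (rule sum_mono)
    fix y assume "y \<in> ptype n ` X"
    then obtain s0 where "s0 \<in> X" "y = ptype n s0" by auto
    thus "fact n \<le> (\<Sum>s\<in>{x\<in>X. ptype n x = y}. card (Cen n s))" using sum_Cen_lower[OF X cl] by simp
  qed
  finally show ?thesis by (simp add: mult.commute)
qed

lemma sum_types_upper: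
  assumes X: "X \<subseteq> {s. s permutes {1..n}}"
  shows "(\<Sum>s\<in>X. card (Cen n s)) \<le> fact n * card (ptype n ` X)"
proof -
  have fX: "finite X" by (rule finite_subset[OF X finite_permutations]) simp
  have "(\<Sum>s\<in>X. card (Cen n s)) = (\<Sum>y\<in>ptype n ` X. \<Sum>s\<in>{x\<in>X. ptype n x = y}. card (Cen n s))"
    by (rule sum.image_gen[OF fX])
  also have "\<dots> \<le> (\<Sum>y\<in>ptype n ` X. fact n)"
  proof (rule sum_mono)
    fix y assume "y \<in> ptype n ` X"
    show "(\<Sum>s\<in>{x\<in>X. ptype n x = y}. card (Cen n s)) \<le> fact n"
      by (rule sum_Cen_upper[where \<tau>=y]) (use X in auto)
  qed
  finally show ?thesis by (simp add: mult.commute)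
qed

lemma alt_transitive:
  assumes "n \<ge> 3" "a \<in> {1..n}" "b \<in> {1..n}"
  shows "\<exists>g \<in> carrier (alt_group n). g a = b"
proof (cases "a = b")
  case True
  have "id \<in> carrier (alt_group n)" by (simp add: alt_group_carrier permutes_id evenperm_id)
  thus ?thesis using True by (intro bexI[where x=id]) auto
next
  case False
  have h1: "card ({1..n} - {a,b}) \<ge> 1"
  proof -
    have "card ({1..n} - {a,b}) = card {1..n} - card {a,b}"
      by (rule card_Diff_subset) (use assms in auto)
    moreover have "card {a,b} = 2" using False by simp
    ultimately show ?thesis using assms(1) by simp
  qed
  have "{1..n} - {a,b} \<noteq> {}"
  proof
    assume "{1..n} - {a,b} = {}"
    hence "card ({1..n} - {a,b}) = 0" by (simp only: card.empty)
    thus False using h1 by linarith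
  qed
  then obtain c where c: "c \<in> {1..n}" "c \<noteq> a" "c \<noteq> b" by blast
  have "cycle_of_list [a,b,c] \<in> three_cycles n"
  proof -
    have "cycle [a,b,c]" using False c by auto
    moreover have "set [a,b,c] \<subseteq> {1..n}" using assms c by auto
    ultimately show ?thesis by (intro CollectI exI[of _ "[a,b,c]"]) simp
  qed
  hence "cycle_of_list [a,b,c] \<in> carrier (alt_group n)" using three_cycles_incl by blast
  moreover have "cycle_of_list [a,b,c] a = b" using False c by (simp add: transpose_def)
  ultimately show ?thesis by blast
qed

lemma generate_invariant:
  assumes st: "s permutes {1..n}" "t permutes {1..n}"
    and V: "s ` V = V" "t ` V = V"
    and g: "g \<in> generate (sym_group n) {s,t}"
  shows "g ` V = V"
  using g
proof (induction rule: generate.induct)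
  case one thus ?case by (simp add: sym_group_one)
next
  case (incl h) thus ?case using V by auto
next
  case (inv h)
  have hc: "h \<in> carrier (sym_group n)" using inv st by (auto simp: sym_group_carrier)
  have hp: "h permutes {1..n}" using hc by (simp add: sym_group_carrier)
  have hV: "h ` V = V" using inv V by auto
  have "inv' h ` (h ` V) = V" using permutes_inverses(2)[OF hp] by (simp add: image_comp)
  thus ?case using hV hc by simp
next
  case (eng h1 h2)
  have "(h1 \<circ> h2) ` V = h1 ` (h2 ` V)" by (simp only: image_comp)
  thus ?case using eng.IH by (simp only: sym_group_mult)
qed

lemma main_few:
  assumes n: "n \<ge> 3" and A: "(s, t) \<in> A_set n"
  shows "card (least_power s ` {1..n}) \<le> 3"
proof -
  have sp: "s permutes {1..n}" and tp: "t permutes {1..n}" and c3: "perm_comm s t \<in> three_cycles n"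
    using A by (auto simp: A_set_def B_set_def sym_group_carrier)
  have gen: "carrier (alt_group n) \<subseteq> generate (sym_group n) {s, t}"
    using A by (auto simp: A_set_def alt_group_carrier sym_group_carrier)
  define c where "c = perm_comm s t"
  obtain cs where cs: "c = cycle_of_list cs" "cycle cs" "length cs = 3" "set cs \<subseteq> {1..n}"
    using c3 c_def by auto
  define K where "K = set cs"
  have cK: "card K = 3" using cs(2,3) distinct_card K_def by fastforce
  have cp: "c permutes {1..n}" using c3 three_cycles_sub c_def by auto
  have P: "permutation s" using perm_of[OF sp] .
  have key: "inv' c (s (t z)) = t (s z)" for z
  proof -
    have "c (t (s z)) = s (t z)"
      unfolding c_def perm_comm_apply using permutes_inverses(2)[OF tp] permutes_inverses(2)[OF sp] by simp
    hence "inv' c (c (t (s z))) = inv' c (s (t z))" by simp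
    thus ?thesis using permutes_inverses(2)[OF cp] by simp
  qed
  have fix_out: "inv' c y = y" if "y \<notin> K" for y
  proof -
    have "c y = y" using id_outside_supp[of y cs] that cs(1) K_def by simp
    hence "inv' c (c y) = inv' c y" by simp
    thus ?thesis using permutes_inverses(2)[OF cp] by simp
  qed
  define V where "V = {x\<in>{1..n}. least_power s x \<notin> least_power s ` K}"
  have fV: "finite V" by (simp add: V_def)
  have sV: "s ` V = V"
  proof (rule endo_inj_surj[OF fV])
    show "s ` V \<subseteq> V" using lp_step[OF P] permutes_in_image[OF sp] by (auto simp: V_def)
    show "inj_on s V" using permutes_inj[OF sp] inj_on_subset by blast
  qed
  have tinvV: "inv' t ` V \<subseteq> V"
  proof
    fix y assume "y \<in> inv' t ` V"
    then obtain x where x: "x \<in> V" "y = inv' t x" by auto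
    have it: "\<forall>m. ((inv' c \<circ> s) ^^ m) x = (s ^^ m) x"
    proof
      fix m show "((inv' c \<circ> s) ^^ m) x = (s ^^ m) x"
      proof (induction m)
        case 0 thus ?case by simp
      next
        case (Suc m)
        have lq: "least_power s ((s ^^ Suc m) x) = least_power s x" using lp_pow[OF P] .
        have "(s ^^ Suc m) x \<notin> K"
        proof
          assume "(s ^^ Suc m) x \<in> K"
          hence "least_power s ((s ^^ Suc m) x) \<in> least_power s ` K" by (rule imageI)
          thus False using lq x(1) by (simp add: V_def)
        qed
        hence "inv' c ((s ^^ Suc m) x) = (s ^^ Suc m) x" using fix_out by simp
        thus ?case using Suc by simp
      qed
    qed
    have conj: "((inv' c \<circ> s) ^^ m) (t z) = t ((s ^^ m) z)" for m z
      by (rule funpow_conj_pt) (simp add: key)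
    have e: "(s ^^ m) (inv' t x) = inv' t ((s ^^ m) x)" for m
    proof -
      have "t ((s ^^ m) (inv' t x)) = (s ^^ m) x"
        using conj[of m "inv' t x"] it permutes_inverses(1)[OF tp] by simp
      hence "inv' t (t ((s ^^ m) (inv' t x))) = inv' t ((s ^^ m) x)" by simp
      thus ?thesis using permutes_inverses(2)[OF tp] by simp
    qed
    have "least_power s (inv' t x) = least_power s x"
    proof (rule lp_eqI[OF P P])
      fix m
      show "(s ^^ m) (inv' t x) = inv' t x \<longleftrightarrow> (s ^^ m) x = x"
        using e[of m] permutes_inj[OF permutes_inv[OF tp]] by (simp add: inj_eq)
    qed
    moreover have "inv' t x \<in> {1..n}" using x(1) permutes_in_image[OF permutes_inv[OF tp]] by (auto simp: V_def)
    ultimately show "y \<in> V" using x by (auto simp: V_def)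
  qed
  have "inv' t ` V = V"
    by (rule endo_inj_surj[OF fV tinvV]) (use permutes_inj[OF permutes_inv[OF tp]] inj_on_subset in blast)
  hence "t ` V = t ` (inv' t ` V)" by simp
  also have "\<dots> = (t \<circ> inv' t) ` V" by (simp only: image_comp)
  also have "\<dots> = V" using permutes_inv_o(1)[OF tp] by simp
  finally have tV: "t ` V = V" .
  have "V = {}"
  proof (rule ccontr)
    assume "V \<noteq> {}"
    then obtain a where a: "a \<in> V" by auto
    obtain b where b: "b \<in> K" using cK by (cases "K = {}") auto
    have "a \<in> {1..n}" "b \<in> {1..n}" using a b cs(4) K_def by (auto simp: V_def)
    then obtain g where g: "g \<in> carrier (alt_group n)" "g a = b" using alt_transitive[OF n] by blast
    have "g ` V = V" using generate_invariant[OF sp tp sV tV] gen g(1) by blast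
    hence "b \<in> V" using a g(2) by blast
    thus False using b by (auto simp: V_def)
  qed
  hence "least_power s ` {1..n} \<subseteq> least_power s ` K" by (auto simp: V_def)
  hence "card (least_power s ` {1..n}) \<le> card (least_power s ` K)"
    by (rule card_mono[rotated]) (simp add: K_def)
  also have "\<dots> \<le> card K" by (rule card_image_le) (simp add: K_def)
  finally show ?thesis using cK by simp
qed

lemma three_cover:
  fixes S :: "nat set"
  assumes "finite S" "card S \<le> 3" "S \<subseteq> {0..n}"
  shows "\<exists>a b c. a \<le> n \<and> b \<le> n \<and> c \<le> n \<and> S \<subseteq> {a,b,c}"
proof -
  obtain xs where xs: "set xs = S" "distinct xs" using finite_distinct_list[OF assms(1)] by blast
  have lx: "length xs \<le> 3" using distinct_card[OF xs(2)] xs(1) assms(2) by simp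
  define ys where "ys = xs @ [0,0,0]"
  have sy: "set ys = S \<union> {0}" using xs(1) by (simp add: ys_def)
  have yb: "ys ! k \<le> n" if "k < 3" for k
  proof -
    have "k < length ys" using that by (simp add: ys_def)
    hence "ys ! k \<in> set ys" by (rule nth_mem)
    thus ?thesis using sy assms(3) by auto
  qed
  have "S \<subseteq> {ys!0, ys!1, ys!2}"
  proof
    fix v assume "v \<in> S"
    then obtain i where i: "i < length xs" "xs ! i = v" using xs(1) by (auto simp: in_set_conv_nth)
    have "ys ! i = v" using i by (simp add: ys_def nth_append)
    moreover have "i = 0 \<or> i = 1 \<or> i = 2" using i(1) lx by linarith
    ultimately show "v \<in> {ys!0, ys!1, ys!2}" by auto
  qed
  moreover have "ys!0 \<le> n" "ys!1 \<le> n" "ys!2 \<le> n" using yb by simp_all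
  ultimately show ?thesis by blast
qed

definition Few :: "nat \<Rightarrow> (nat \<Rightarrow> nat) set" where
  "Few n = {s. s permutes {1..n} \<and> card (least_power s ` {1..n}) \<le> 3}"

lemma ptype_le: "ptype n s l \<le> n"
proof -
  have "ptype n s l \<le> card {1..n}" unfolding ptype_def by (rule card_mono) auto
  thus ?thesis by simp
qed

lemma card_types_few: "card (ptype n ` Few n) \<le> (n+1)^6"
proof -
  define f where "f = (\<lambda>(a::nat,b::nat,c::nat,x::nat,y::nat,z::nat).
        (\<lambda>l. if l = a then x else if l = b then y else if l = c then z else 0))"
  define N where "N = {0..n}"
  define P where "P = N \<times> N \<times> N \<times> N \<times> N \<times> N"
  have fP: "finite P" by (simp add: P_def N_def)
  have sub: "ptype n ` Few n \<subseteq> f ` P"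
  proof
    fix \<tau> assume "\<tau> \<in> ptype n ` Few n"
    then obtain s where s: "s permutes {1..n}" "card (least_power s ` {1..n}) \<le> 3" "\<tau> = ptype n s"
      by (auto simp: Few_def)
    have "least_power s ` {1..n} \<subseteq> {0..n}"
      using lp_le_card[OF s(1)] by fastforce
    then obtain a b c where abc: "a \<le> n" "b \<le> n" "c \<le> n" "least_power s ` {1..n} \<subseteq> {a,b,c}"
      using three_cover[OF _ s(2)] by blast
    have "ptype n s = f (a, b, c, ptype n s a, ptype n s b, ptype n s c)"
    proof (rule ext)
      fix l
      show "ptype n s l = f (a, b, c, ptype n s a, ptype n s b, ptype n s c) l"
      proof (cases "l = a \<or> l = b \<or> l = c")
        case True thus ?thesis by (auto simp: f_def)
      next
        case False
        have "{x\<in>{1..n}. least_power s x = l} = {}" using abc(4) False by blast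
        hence "ptype n s l = 0" by (simp add: ptype_def)
        thus ?thesis using False by (simp add: f_def)
      qed
    qed
    moreover have "(a, b, c, ptype n s a, ptype n s b, ptype n s c) \<in> P"
      using abc ptype_le by (simp add: P_def N_def)
    ultimately show "\<tau> \<in> f ` P" using s(3) by blast
  qed
  have "card (ptype n ` Few n) \<le> card (f ` P)" by (rule card_mono[OF finite_imageI[OF fP] sub])
  also have "\<dots> \<le> card P" by (rule card_image_le[OF fP])
  also have "\<dots> = (n+1)^6" by (simp add: P_def N_def card_cartesian_product eval_nat_numeral)
  finally show ?thesis .
qed

fun base :: "nat \<Rightarrow> nat" where
  "base 0 = 0" | "base (Suc d) = base d + d"

definition bi :: "nat \<Rightarrow> nat" where "bi x = (LEAST d. x \<le> base (Suc d))"

lemma base_mono: "e \<le> d \<Longrightarrow> base e \<le> base d"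
  by (induction d) (auto simp: le_Suc_eq)

lemma base_ge: "x \<le> base (Suc x)"
  by (induction x) auto

lemma base_sq: "base (Suc k) \<le> k * k"
  by (induction k) auto

lemma base3: "d \<ge> 3 \<Longrightarrow> base d \<ge> 3"
  using base_mono[of 3 d] by (simp add: numeral_3_eq_3)

lemma bi_eq:
  assumes "base d < x" "x \<le> base (Suc d)" shows "bi x = d"
proof -
  have le: "bi x \<le> d" unfolding bi_def by (rule Least_le) (use assms in simp)
  have "x \<le> base (Suc (bi x))" unfolding bi_def by (rule LeastI[of _ d]) (use assms in simp)
  moreover have "\<not> bi x < d"
  proof
    assume "bi x < d"
    hence "base (Suc (bi x)) \<le> base d" by (intro base_mono) simp
    thus False using assms(1) \<open>x \<le> base (Suc (bi x))\<close> by simp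
  qed
  ultimately show ?thesis using le by simp
qed

lemma bi_block:
  assumes "1 \<le> x" shows "base (bi x) < x" "x \<le> base (Suc (bi x))"
proof -
  show ub: "x \<le> base (Suc (bi x))" unfolding bi_def by (rule LeastI[of _ x]) (rule base_ge)
  show "base (bi x) < x"
  proof (cases "bi x")
    case 0 thus ?thesis using assms by simp
  next
    case (Suc e)
    have "\<not> x \<le> base (Suc e)"
    proof
      assume "x \<le> base (Suc e)"
      hence "bi x \<le> e" unfolding bi_def by (rule Least_le)
      thus False using Suc by simp
    qed
    thus ?thesis using Suc by simp
  qed
qed

definition sD :: "nat set \<Rightarrow> nat \<Rightarrow> nat" where
  "sD D x = (if x = 1 then 2 else if x = 2 then 1 else
     if 4 \<le> x \<and> bi x \<in> D then (if x = base (Suc (bi x)) then base (bi x) + 1 else x + 1) else x)"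

lemma sD_rot:
  assumes "d \<in> D" "d \<ge> 3" "r < d"
  shows "sD D (base d + 1 + r) = base d + 1 + (Suc r mod d)"
proof -
  define x where "x = base d + 1 + r"
  have b3: "base d \<ge> 3" using base3[OF assms(2)] .
  have bx: "bi x = d" by (rule bi_eq) (use assms in \<open>simp_all add: x_def\<close>)
  have x4: "4 \<le> x" "x \<noteq> 1" "x \<noteq> 2" using b3 by (auto simp: x_def)
  show ?thesis
  proof (cases "Suc r = d")
    case True
    hence "x = base (Suc d)" by (simp add: x_def)
    thus ?thesis using x4 bx assms(1) True by (simp add: sD_def x_def)
  next
    case False
    hence "Suc r < d" using assms(3) by simp
    hence "x \<noteq> base (Suc d)" by (simp add: x_def)
    thus ?thesis using x4 bx assms(1) \<open>Suc r < d\<close> by (simp add: sD_def x_def)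
  qed
qed

lemma sD_iter:
  assumes "d \<in> D" "d \<ge> 3" "r < d"
  shows "(sD D ^^ j) (base d + 1 + r) = base d + 1 + ((r + j) mod d)"
proof (induction j)
  case 0 thus ?case using assms(3) by simp
next
  case (Suc j)
  have "(r + j) mod d < d" using assms by simp
  hence "sD D (base d + 1 + (r + j) mod d) = base d + 1 + (Suc ((r + j) mod d) mod d)"
    by (rule sD_rot[OF assms(1,2)])
  thus ?case using Suc by (simp add: mod_Suc_eq)
qed

lemma sD_fix: "\<not> (x = 1 \<or> x = 2 \<or> (4 \<le> x \<and> bi x \<in> D)) \<Longrightarrow> sD D x = x"
  by (auto simp: sD_def)

lemma sD_12: "sD D 1 = 2" "sD D 2 = 1" "sD D 3 = 3"
  by (auto simp: sD_def)

lemma mod_add_self_dvd: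
  fixes r j d :: nat
  assumes "r < d" "(r + j) mod d = r" shows "d dvd j"
proof -
  have "(r + j) mod d = (r + j mod d) mod d" by (simp add: mod_add_right_eq)
  moreover have "j mod d < d" using assms(1) by simp
  ultimately have h: "(r + j mod d) mod d = r" using assms(2) by simp
  show ?thesis
  proof (cases "r + j mod d < d")
    case True thus ?thesis using h by (simp add: dvd_eq_mod_eq_0)
  next
    case False
    have lt: "r + j mod d - d < d" using \<open>j mod d < d\<close> assms(1) by linarith
    have "(r + j mod d) mod d = (r + j mod d - d) mod d" using False by (simp add: le_mod_geq)
    also have "\<dots> = r + j mod d - d" using lt by simp
    finally have "(r + j mod d) mod d = r + j mod d - d" .
    thus ?thesis using h \<open>j mod d < d\<close> False by linarith
  qed
qed

context
  fixes n k :: nat and D :: "nat set"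
  assumes n3: "n \<ge> 3" and Dk: "D \<subseteq> {3..k}" and kn: "base (Suc k) \<le> n"
begin

lemma sD_block_decomp:
  assumes "4 \<le> y" "bi y \<in> D"
  shows "y = base (bi y) + 1 + (y - base (bi y) - 1)" "y - base (bi y) - 1 < bi y" "bi y \<ge> 3"
proof -
  have y1: "1 \<le> y" using assms by simp
  show "y = base (bi y) + 1 + (y - base (bi y) - 1)" using bi_block(1)[OF y1] by simp
  show "y - base (bi y) - 1 < bi y" using bi_block[OF y1] by simp
  show "bi y \<ge> 3" using assms(2) Dk by auto
qed

lemma block_in_range:
  assumes "d \<in> D" "r < d" shows "base d + 1 + r \<in> {1..n}"
proof -
  have "d \<le> k" using assms Dk by auto
  hence "base (Suc d) \<le> base (Suc k)" by (intro base_mono) simp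
  thus ?thesis using assms kn by simp
qed

lemma sD_maps: "x \<in> {1..n} \<Longrightarrow> sD D x \<in> {1..n}"
proof -
  assume x: "x \<in> {1..n}"
  show ?thesis
  proof (cases "x = 1 \<or> x = 2 \<or> (4 \<le> x \<and> bi x \<in> D)")
    case False thus ?thesis using sD_fix x by simp
  next
    case True
    then consider "x = 1" | "x = 2" | "4 \<le> x \<and> bi x \<in> D" by blast
    thus ?thesis
    proof cases
      case 1 thus ?thesis using sD_12 n3 by simp
    next
      case 2 thus ?thesis using sD_12 n3 by simp
    next
      case 3
      note dec = sD_block_decomp[OF conjunct1[OF 3] conjunct2[OF 3]]
      have "sD D x = base (bi x) + 1 + (Suc (x - base (bi x) - 1) mod bi x)"
        using sD_rot[OF conjunct2[OF 3] dec(3) dec(2)] dec(1) by simp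
      moreover have "Suc (x - base (bi x) - 1) mod bi x < bi x" using dec(3) by simp
      ultimately show ?thesis using block_in_range[OF conjunct2[OF 3]] by simp
    qed
  qed
qed

lemma sD_surj: "y \<in> {1..n} \<Longrightarrow> y \<in> sD D ` {1..n}"
proof -
  assume y: "y \<in> {1..n}"
  show ?thesis
  proof (cases "y = 1 \<or> y = 2 \<or> (4 \<le> y \<and> bi y \<in> D)")
    case False thus ?thesis using sD_fix[OF False] y by (metis imageI)
  next
    case True
    then consider "y = 1" | "y = 2" | "4 \<le> y \<and> bi y \<in> D" by blast
    thus ?thesis
    proof cases
      case 1
      have "2 \<in> {1..n}" using n3 by simp
      thus ?thesis using 1 sD_12 by (metis imageI)
    next
      case 2
      have "1 \<in> {1..n}" using n3 by simp
      thus ?thesis using 2 sD_12 by (metis imageI)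
    next
      case 3
      define d where "d = bi y"
      define r where "r = y - base d - 1"
      note dec = sD_block_decomp[OF conjunct1[OF 3] conjunct2[OF 3], folded d_def, folded r_def]
      have dD: "d \<in> D" using 3 d_def by simp
      define r' where "r' = (r + (d - 1)) mod d"
      have r'd: "r' < d" using dec(3) by (simp add: r'_def)
      have "(sD D ^^ 1) (base d + 1 + r') = base d + 1 + ((r' + 1) mod d)"
        by (rule sD_iter[OF dD dec(3) r'd])
      moreover have "(r' + 1) mod d = r"
      proof -
        have "(r' + 1) mod d = (r + (d - 1) + 1) mod d" by (simp add: r'_def mod_Suc_eq)
        also have "\<dots> = (r + d) mod d" using dec(3) by simp
        also have "\<dots> = r" using dec(2) by simp
        finally show ?thesis .
      qed
      ultimately have "sD D (base d + 1 + r') = y" using dec(1) by simp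
      thus ?thesis using block_in_range[OF dD r'd] by (metis imageI)
    qed
  qed
qed

lemma sD_permutes: "sD D permutes {1..n}"
proof (rule bij_imp_permutes)
  have sub: "sD D ` {1..n} \<subseteq> {1..n}" using sD_maps by blast
  have sup: "{1..n} \<subseteq> sD D ` {1..n}" using sD_surj by blast
  have "inj_on (sD D) {1..n}" by (rule finite_surj_inj[OF _ sup]) simp
  thus "bij_betw (sD D) {1..n} {1..n}" using sub sup by (simp add: bij_betw_def)
  fix x assume x: "x \<notin> {1..n}"
  show "sD D x = x"
  proof (rule sD_fix, rule notI)
    assume h: "x = 1 \<or> x = 2 \<or> (4 \<le> x \<and> bi x \<in> D)"
    show False
    proof (cases "x = 1 \<or> x = 2")
      case True thus False using x n3 by auto
    next
      case False
      hence h2: "4 \<le> x" "bi x \<in> D" using h by auto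
      hence "bi x \<le> k" using Dk by auto
      hence "base (Suc (bi x)) \<le> base (Suc k)" by (intro base_mono) simp
      moreover have "x \<le> base (Suc (bi x))" using bi_block(2)[of x] h2 by simp
      ultimately show False using x kn h2 by simp
    qed
  qed
qed

lemma sD_perm: "permutation (sD D)"
  using perm_of[OF sD_permutes] .

lemma lp_block:
  assumes "d \<in> D" "r < d" shows "least_power (sD D) (base d + 1 + r) = d"
proof -
  have d3: "d \<ge> 3" using assms Dk by auto
  have "(sD D ^^ d) (base d + 1 + r) = base d + 1 + r" using sD_iter[OF assms(1) d3 assms(2)] assms(2) by simp
  hence a: "least_power (sD D) (base d + 1 + r) dvd d" using least_power_dvd[OF sD_perm] by blast
  have "(sD D ^^ least_power (sD D) (base d + 1 + r)) (base d + 1 + r) = base d + 1 + r"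
    using least_power_of_permutation(1)[OF sD_perm] .
  hence "(r + least_power (sD D) (base d + 1 + r)) mod d = r"
    using sD_iter[OF assms(1) d3 assms(2)] by simp
  hence b: "d dvd least_power (sD D) (base d + 1 + r)" by (rule mod_add_self_dvd[OF assms(2)])
  show ?thesis using a b by (simp add: dvd_antisym)
qed

lemma lp_class: "least_power (sD D) x \<in> {1,2} \<union> D"
proof (cases "x = 1 \<or> x = 2 \<or> (4 \<le> x \<and> bi x \<in> D)")
  case False
  have "(sD D ^^ 1) x = x" using sD_fix[OF False] by simp
  hence "least_power (sD D) x dvd 1" using least_power_dvd[OF sD_perm] by blast
  thus ?thesis by simp
next
  case True
  then consider "x = 1 \<or> x = 2" | "4 \<le> x \<and> bi x \<in> D" by blast
  thus ?thesis
  proof cases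
    case 1
    have e2: "(sD D ^^ 2) x = sD D (sD D x)" by (simp add: numeral_2_eq_2)
    have "sD D (sD D x) = x" using 1 sD_12(1,2) by (elim disjE) simp_all
    hence "(sD D ^^ 2) x = x" using e2 by simp
    hence "least_power (sD D) x dvd 2" using least_power_dvd[OF sD_perm] by blast
    moreover have "least_power (sD D) x > 0" using least_power_of_permutation(2)[OF sD_perm] .
    ultimately have "least_power (sD D) x \<le> 2" by (simp add: dvd_imp_le)
    hence "least_power (sD D) x = 1 \<or> least_power (sD D) x = 2" using \<open>least_power (sD D) x > 0\<close> by linarith
    thus ?thesis by blast
  next
    case 2
    note dec = sD_block_decomp[OF conjunct1[OF 2] conjunct2[OF 2]]
    have "least_power (sD D) x = bi x"
      using lp_block[OF conjunct2[OF 2] dec(2)] dec(1) by simp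
    thus ?thesis using 2 by simp
  qed
qed

end

lemma Tt_witness:
  assumes "s permutes {1..n}" "n \<ge> 3" "s 1 = 2" "s 2 = 1" "s 3 = 3"
  shows "transpose 2 3 \<in> Tt n s"
proof -
  let ?t = "transpose (2::nat) 3"
  have i1: "inv' s 1 = 2" "inv' s 2 = 1" "inv' s 3 = 3"
    using permutes_inverses(2)[OF assms(1), of 2] permutes_inverses(2)[OF assms(1), of 1]
      permutes_inverses(2)[OF assms(1), of 3] assms(3-5) by auto
  have i2: "inv' s x \<notin> {1,2,3}" "s (inv' s x) = x" if "x \<notin> {1,2,3}" for x
  proof -
    show "s (inv' s x) = x" using permutes_inverses(1)[OF assms(1)] .
    thus "inv' s x \<notin> {1,2,3}" using that assms(3-5) by auto
  qed
  have pc: "perm_comm s ?t = cycle_of_list [1,3,2]"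
  proof (rule ext)
    fix x
    show "perm_comm s ?t x = cycle_of_list [1,3,2] x"
    proof (cases "x \<in> {1,2,3}")
      case True
      then consider "x = 1" | "x = 2" | "x = 3" by blast
      thus ?thesis
      proof cases
        case 1 thus ?thesis using i1 assms(3-5) by (simp add: perm_comm_apply)
      next
        case 2 thus ?thesis using i1 assms(3-5) by (simp add: perm_comm_apply)
      next
        case 3 thus ?thesis using i1 assms(3-5) by (simp add: perm_comm_apply)
      qed
    next
      case False
      have t1: "?t x = x" using False by (auto simp: transpose_def)
      have t2: "?t (inv' s x) = inv' s x" using i2(1)[OF False] by (auto simp: transpose_def)
      have "perm_comm s ?t x = x" by (simp add: perm_comm_apply t1 t2 i2(2)[OF False])
      moreover have "cycle_of_list [1,3,2] x = x" by (rule id_outside_supp) (use False in auto)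
      ultimately show ?thesis by simp
    qed
  qed
  have "cycle_of_list [1,3,2] \<in> three_cycles n"
  proof -
    have "cycle [1::nat,3,2]" by simp
    moreover have "set [1::nat,3,2] \<subseteq> {1..n}" using assms(2) by auto
    ultimately show ?thesis by (intro CollectI exI[of _ "[1,3,2]"]) simp
  qed
  moreover have "?t permutes {1..n}" by (rule permutes_swap_id) (use assms(2) in auto)
  ultimately show ?thesis using pc by (simp add: Tt_def)
qed

lemma lim_g: "(\<lambda>n::nat. (real n + 1)^9 / 2 powr (sqrt (real n) - 3)) \<longlonglongrightarrow> 0"
  by real_asymp

lemma card_A_bound:
  assumes n: "n \<ge> 3"
  shows "card (A_set n) \<le> n^3 * ((n+1)^6 * fact n)"
proof -
  have sub: "A_set n \<subseteq> Sigma (Few n) (Tt n)"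
  proof
    fix z assume z: "z \<in> A_set n"
    obtain s t where st: "z = (s,t)" by (cases z)
    have "(s,t) \<in> B_set n" using z st by (simp add: A_set_def)
    hence "s permutes {1..n}" "t \<in> Tt n s" by (auto simp: B_eq)
    moreover have "card (least_power s ` {1..n}) \<le> 3" using main_few[OF n] z st by simp
    ultimately show "z \<in> Sigma (Few n) (Tt n)" using st by (simp add: Few_def)
  qed
  have fF: "finite (Few n)"
    by (rule finite_subset[OF _ finite_permutations[of "{1..n}"]]) (auto simp: Few_def)
  have FG: "Few n \<subseteq> {s. s permutes {1..n}}" by (auto simp: Few_def)
  have "card (A_set n) \<le> card (Sigma (Few n) (Tt n))"
    by (rule card_mono[OF _ sub]) (use fF finite_Tt in auto)
  also have "\<dots> = (\<Sum>s\<in>Few n. card (Tt n s))" using card_SigmaI[OF fF, of "Tt n"] finite_Tt by simp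
  also have "\<dots> \<le> (\<Sum>s\<in>Few n. n^3 * card (Cen n s))"
  proof (rule sum_mono)
    fix s assume "s \<in> Few n"
    hence "card (Tt n s) \<le> card (three_cycles n) * card (Cen n s)"
      using card_Tt_le by (auto simp: Few_def)
    also have "\<dots> \<le> n^3 * card (Cen n s)" using card_three_cycles by (rule mult_right_mono) simp
    finally show "card (Tt n s) \<le> n^3 * card (Cen n s)" .
  qed
  also have "\<dots> = n^3 * (\<Sum>s\<in>Few n. card (Cen n s))" by (simp add: sum_distrib_left)
  also have "\<dots> \<le> n^3 * (fact n * card (ptype n ` Few n))"
    using sum_types_upper[OF FG] by (rule mult_left_mono) simp
  also have "\<dots> \<le> n^3 * (fact n * (n+1)^6)"
    using card_types_few[of n] by (intro mult_left_mono) simp_all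
  finally show ?thesis by (simp add: mult.commute)
qed

lemma ptype_pos:
  assumes "n \<ge> 3" "D \<subseteq> {3..k}" "base (Suc k) \<le> n" "d \<in> D"
  shows "ptype n (sD D) d > 0"
proof -
  have d0: "0 < d" using assms by auto
  have "base d + 1 + 0 \<in> {1..n}" by (rule block_in_range[OF assms(1-4) d0])
  moreover have "least_power (sD D) (base d + 1 + 0) = d" by (rule lp_block[OF assms(1-4) d0])
  ultimately have "base d + 1 \<in> {x\<in>{1..n}. least_power (sD D) x = d}" by simp
  hence "{x\<in>{1..n}. least_power (sD D) x = d} \<noteq> {}" by blast
  thus ?thesis unfolding ptype_def by (simp add: card_gt_0_iff)
qed

lemma ptype_zero:
  assumes "n \<ge> 3" "D \<subseteq> {3..k}" "base (Suc k) \<le> n" "d \<ge> 3" "d \<notin> D"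
  shows "ptype n (sD D) d = 0"
proof -
  have "{x\<in>{1..n}. least_power (sD D) x = d} = {}"
  proof (rule equals0I)
    fix x assume "x \<in> {x\<in>{1..n}. least_power (sD D) x = d}"
    hence "least_power (sD D) x = d" by simp
    moreover have "least_power (sD D) x \<in> {1,2} \<union> D" by (rule lp_class[OF assms(1-3)])
    ultimately show False using assms(4,5) by auto
  qed
  thus ?thesis unfolding ptype_def by simp
qed

lemma card_B_bound:
  assumes n: "n \<ge> 3" and kn: "base (Suc k) \<le> n"
  shows "2^(k-2) * fact n \<le> card (B_set n)"
proof -
  define G where "G = {s. s permutes {1..n::nat}}"
  define Y where "Y = {s. s permutes {1..n} \<and> Tt n s \<noteq> {}}"
  have fG: "finite G" by (simp add: G_def finite_permutations)
  have YG: "Y \<subseteq> G" by (auto simp: Y_def G_def)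
  have clY: "g \<circ> s \<circ> inv' g \<in> Y" if sY: "s \<in> Y" and gp: "g permutes {1..n}" for s g
  proof -
    obtain t where t: "t \<in> Tt n s" using sY unfolding Y_def by blast
    have sp: "s permutes {1..n}" using sY by (simp add: Y_def)
    have "g \<circ> t \<circ> inv' g \<in> Tt n (g \<circ> s \<circ> inv' g)" by (rule Tt_conj[OF gp sp t])
    thus ?thesis using conj_permutes[OF gp sp] by (auto simp: Y_def)
  qed
  have "2^(k-2) = card (Pow {3..k})" by (simp add: card_Pow)
  also have "\<dots> \<le> card (ptype n ` Y)"
  proof (rule card_inj_on_le[of "\<lambda>D. ptype n (sD D)"])
    show "finite (ptype n ` Y)" using finite_subset[OF YG fG] by simp
    show "(\<lambda>D. ptype n (sD D)) ` Pow {3..k} \<subseteq> ptype n ` Y"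
    proof
      fix z assume "z \<in> (\<lambda>D. ptype n (sD D)) ` Pow {3..k}"
      then obtain D where D: "D \<subseteq> {3..k}" "z = ptype n (sD D)" by auto
      have sp: "sD D permutes {1..n}" by (rule sD_permutes[OF n D(1) kn])
      have "transpose 2 3 \<in> Tt n (sD D)" by (rule Tt_witness[OF sp n sD_12])
      hence "sD D \<in> Y" using sp by (auto simp: Y_def)
      thus "z \<in> ptype n ` Y" using D(2) by blast
    qed
    show "inj_on (\<lambda>D. ptype n (sD D)) (Pow {3..k})"
    proof (rule inj_onI, rule ccontr)
      fix D1 D2 assume D1: "D1 \<in> Pow {3..k}" and D2: "D2 \<in> Pow {3..k}"
        and e: "ptype n (sD D1) = ptype n (sD D2)" and ne: "D1 \<noteq> D2"
      have D1s: "D1 \<subseteq> {3..k}" and D2s: "D2 \<subseteq> {3..k}" using D1 D2 by auto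
      show False
      proof (cases "\<exists>d. d \<in> D1 \<and> d \<notin> D2")
        case True
        then obtain d where d: "d \<in> D1" "d \<notin> D2" by blast
        have "d \<ge> 3" using d D1s by auto
        have "ptype n (sD D1) d > 0" by (rule ptype_pos[OF n D1s kn d(1)])
        moreover have "ptype n (sD D2) d = 0" by (rule ptype_zero[OF n D2s kn \<open>d \<ge> 3\<close> d(2)])
        ultimately show False using e by simp
      next
        case False
        then obtain d where d: "d \<in> D2" "d \<notin> D1" using ne by blast
        have "d \<ge> 3" using d D2s by auto
        have "ptype n (sD D2) d > 0" by (rule ptype_pos[OF n D2s kn d(1)])
        moreover have "ptype n (sD D1) d = 0" by (rule ptype_zero[OF n D1s kn \<open>d \<ge> 3\<close> d(2)])
        ultimately show False using e by simp
      qed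
    qed
  qed
  finally have c1: "2^(k-2) \<le> card (ptype n ` Y)" .
  have "2^(k-2) * fact n \<le> fact n * card (ptype n ` Y)" using c1 by (simp add: mult.commute)
  also have "\<dots> \<le> (\<Sum>s\<in>Y. card (Cen n s))"
    by (rule sum_types_lower) (use YG clY in \<open>auto simp: G_def\<close>)
  also have "\<dots> \<le> (\<Sum>s\<in>Y. card (Tt n s))"
  proof (rule sum_mono)
    fix s assume "s \<in> Y"
    then obtain t where "s permutes {1..n}" "t \<in> Tt n s" by (auto simp: Y_def)
    thus "card (Cen n s) \<le> card (Tt n s)" by (rule card_Cen_le_Tt)
  qed
  also have "\<dots> \<le> (\<Sum>s\<in>G. card (Tt n s))" by (rule sum_mono2[OF fG YG]) simp
  also have "\<dots> = card (B_set n)" unfolding B_eq G_def using card_SigmaI[OF fG[unfolded G_def], of "Tt n"] finite_Tt by simp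
  finally show ?thesis .
qed

theorem mainTheorem20:
  shows "(\<lambda>n. real (card (A_set n)) / real (card (B_set n))) \<longlonglongrightarrow> 0"
proof -
  define g where "g = (\<lambda>n::nat. (real n + 1)^9 / 2 powr (sqrt (real n) - 3))"
  have ev: "real (card (A_set n)) / real (card (B_set n)) \<le> g n" if n16: "n \<ge> 16" for n
  proof -
    define k where "k = nat \<lfloor>sqrt (real n)\<rfloor>"
    have sq4: "sqrt (real n) \<ge> 4"
    proof -
      have "sqrt ((4::real)^2) \<le> sqrt (real n)" using n16 by (intro real_sqrt_le_mono) simp
      thus ?thesis by simp
    qed
    have kle: "real k \<le> sqrt (real n)" unfolding k_def using sq4 by linarith
    have kgt: "real k > sqrt (real n) - 1" unfolding k_def using sq4 by linarith
    have k4: "k \<ge> 4" using kgt sq4 by linarith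
    have "real (k * k) \<le> real n"
    proof -
      have "real k * real k \<le> sqrt (real n) * sqrt (real n)" using kle by (intro mult_mono) auto
      thus ?thesis by simp
    qed
    hence kk: "k * k \<le> n" by linarith
    have kn: "base (Suc k) \<le> n" using base_sq[of k] kk by linarith
    have n3: "n \<ge> 3" using n16 by simp
    have A: "real (card (A_set n)) \<le> real (n^3 * ((n+1)^6 * fact n))"
      using card_A_bound[OF n3] by linarith
    have B: "real (2^(k-2) * fact n) \<le> real (card (B_set n))"
      using card_B_bound[OF n3 kn] by linarith
    have F: "real (fact n) > 0" by simp
    have P: "(2::real)^(k-2) > 0" by simp
    have "real (card (A_set n)) / real (card (B_set n)) \<le> real (n^3 * ((n+1)^6 * fact n)) / real (2^(k-2) * fact n)"
      by (rule frac_le) (use A B F P in auto)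
    also have "\<dots> = real n ^ 3 * (real n + 1) ^ 6 / 2^(k-2)" using F by (simp add: field_simps)
    also have "\<dots> \<le> (real n + 1)^9 / 2 powr (sqrt (real n) - 3)"
    proof (rule frac_le)
      have "real n ^ 3 \<le> (real n + 1)^3" by (rule power_mono) auto
      hence "real n ^ 3 * (real n + 1) ^ 6 \<le> (real n + 1)^3 * (real n + 1) ^ 6"
        by (rule mult_right_mono) simp
      thus "real n ^ 3 * (real n + 1) ^ 6 \<le> (real n + 1)^9" by (simp add: power_add[symmetric])
      show "0 \<le> (real n + 1)^9" by simp
      show "0 < 2 powr (sqrt (real n) - 3)" by simp
      have "2 powr (sqrt (real n) - 3) \<le> 2 powr (real (k - 2))"
        by (rule powr_mono) (use kgt k4 in auto)
      also have "\<dots> = 2 ^ (k - 2)" by (simp add: powr_realpow)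
      finally show "2 powr (sqrt (real n) - 3) \<le> 2 ^ (k - 2)" .
    qed
    finally show ?thesis unfolding g_def .
  qed
  show ?thesis
  proof (rule tendsto_sandwich[of "\<lambda>_. 0" _ _ g])
    show "\<forall>\<^sub>F n in sequentially. 0 \<le> real (card (A_set n)) / real (card (B_set n))" by simp
    show "\<forall>\<^sub>F n in sequentially. real (card (A_set n)) / real (card (B_set n)) \<le> g n"
      using ev by (auto simp: eventually_sequentially)
    show "(\<lambda>_. 0) \<longlonglongrightarrow> (0::real)" by simp
    show "g \<longlonglongrightarrow> 0" unfolding g_def by (rule lim_g)
  qed
qed

end
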